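(* Let $n\ge 3$, $q=\frac{2n}{n-2}$, $\kappa=\frac{n-1}{n}$. Identify $S^1$ with $[-\pi,\pi]$ with endpoints identified, and let $\lambda=-1$ on $(-\pi,0)$, $\lambda=1$ on $(0,\pi)$. For $t\in\mathbb{R}$ let $\tau_t=t+\lambda$. Let $N$ be a smooth positive function on $S^1$ and $\eta,\mu\in\mathbb{R}$. Suppose $(\phi,w)\in W^{2,\infty}_+(S^1)\times W^{1,\infty}(S^1)$ solves $$-2\kappa q\,\phi''-2\eta^2\phi^{-q-1}-\kappa\Big(\mu+\tfrac{1}{2N}w'\Big)^2\phi^{-q-1}+\kappa\tau_t^2\phi^{q-1}=0,\qquad \Big(\tfrac{1}{2N}w'\Big)'-\phi^q\tau_t'=0.$$ Let $\gamma_N=-\frac{\int_{S^1}\lambda N}{\int_{S^1}N}$. Then $$\frac{1}{2N}w'=\phi(0)^q\,[\lambda+\gamma_N].$$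
   Context: Here $\tau_t'=2(\delta_0-\delta_\pi)$ is the distributional derivative ($\delta_x$ the Dirac mass at $x$), the second equation is understood in the sense of distributions, and the subscript $+$ denotes positive functions. *)

theory Defs
  imports "HOL-Analysis.Analysis"
begin

text \<open>Functions on S^1 are represented as 2*pi-periodic functions on the real line.\<close>

definition periodic2pi :: "(real \<Rightarrow> real) \<Rightarrow> bool" where
  "periodic2pi f \<longleftrightarrow> (\<forall>x. f (x + 2 * pi) = f x)"

definition smooth_fun :: "(real \<Rightarrow> real) \<Rightarrow> bool" where
  "smooth_fun f \<longleftrightarrow> (\<forall>k x. ((deriv ^^ k) f) differentiable (at x))"

text \<open>g is a weak derivative of f lying in L-infinity: g is measurable, essentially
  bounded and f is the indefinite integral of g (so f is locally absolutely continuous).\<close>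
definition weak_deriv_Linf :: "(real \<Rightarrow> real) \<Rightarrow> (real \<Rightarrow> real) \<Rightarrow> bool" where
  "weak_deriv_Linf f g \<longleftrightarrow> g \<in> borel_measurable lborel \<and>
     (\<exists>B. AE x in lborel. \<bar>g x\<bar> \<le> B) \<and>
     (\<forall>a b. f b - f a = (LBINT x=a..b. g x))"

text \<open>lambda: -1 on (-pi,0), 1 on (0,pi) (mod 2 pi); value at the points 0, pi irrelevant.\<close>
definition lam :: "real \<Rightarrow> real" where
  "lam x = (let y = x - 2 * pi * of_int \<lfloor>(x + pi) / (2 * pi)\<rfloor> in
            if -pi < y \<and> y < 0 then -1 else if 0 < y \<and> y < pi then 1 else 0)"

end

theory Submission
  imports Defs "HOL-Analysis.Radon_Nikodym"
begin

lemma rdiff_iff: "(f::real\<Rightarrow>real) differentiable (at x) \<longleftrightarrow> f field_differentiable (at x)"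
  by (simp add: real_differentiable_def field_differentiable_def)

definition Ck :: "nat \<Rightarrow> (real \<Rightarrow> real) \<Rightarrow> bool" where
  "Ck k f \<longleftrightarrow> (\<forall>j\<le>k. \<forall>x. ((deriv ^^ j) f) differentiable (at x))"

lemma Ck_Suc: "Ck (Suc k) f \<longleftrightarrow> (\<forall>x. f differentiable (at x)) \<and> Ck k (deriv f)"
proof -
  have "(\<forall>j\<le>Suc k. P j) \<longleftrightarrow> P 0 \<and> (\<forall>j\<le>k. P (Suc j))" for P
    by (metis Suc_le_mono not0_implies_Suc zero_le)
  then show ?thesis unfolding Ck_def by (simp add: funpow_Suc_right del: funpow.simps)
qed

lemma Ck_0: "Ck 0 f \<longleftrightarrow> (\<forall>x. f differentiable (at x))"
  by (simp add: Ck_def)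

lemma smooth_Ck: "smooth_fun f \<longleftrightarrow> (\<forall>k. Ck k f)"
  unfolding smooth_fun_def Ck_def by blast

lemma Ck_mono: "Ck (Suc k) f \<Longrightarrow> Ck k f"
  by (simp add: Ck_def)

lemma Ck_mono': "Ck k f \<Longrightarrow> j \<le> k \<Longrightarrow> Ck j f"
  by (simp add: Ck_def)

lemma Ck_cong: "f = g \<Longrightarrow> Ck k f \<Longrightarrow> Ck k g" by simp

lemma Ck_add: "Ck k f \<Longrightarrow> Ck k g \<Longrightarrow> Ck k (\<lambda>x. f x + g x)"
proof (induction k arbitrary: f g)
  case 0 then show ?case by (simp add: Ck_0 differentiable_add)
next
  case (Suc k)
  have df: "\<And>x. f differentiable (at x)" and dg: "\<And>x. g differentiable (at x)"
    using Suc.prems by (auto simp: Ck_Suc)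
  have e: "deriv (\<lambda>x. f x + g x) = (\<lambda>x. deriv f x + deriv g x)"
    using df dg by (auto simp: rdiff_iff)
  show ?case using Suc df dg by (auto simp: Ck_Suc e intro!: differentiable_add)
qed

lemma Ck_mult: "Ck k f \<Longrightarrow> Ck k g \<Longrightarrow> Ck k (\<lambda>x. f x * g x)"
proof (induction k arbitrary: f g)
  case 0 then show ?case by (simp add: Ck_0 differentiable_mult)
next
  case (Suc k)
  have df: "\<And>x. f differentiable (at x)" and dg: "\<And>x. g differentiable (at x)"
    using Suc.prems by (auto simp: Ck_Suc)
  have e: "deriv (\<lambda>x. f x * g x) = (\<lambda>x. f x * deriv g x + deriv f x * g x)"
    using df dg by (auto simp: rdiff_iff)
  have fk: "Ck k f" "Ck k g" using Suc.prems by (auto intro: Ck_mono)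
  have "Ck k (deriv f)" "Ck k (deriv g)" using Suc.prems by (auto simp: Ck_Suc)
  then have "Ck k (\<lambda>x. f x * deriv g x)" "Ck k (\<lambda>x. deriv f x * g x)"
    using Suc.IH fk by auto
  then have "Ck k (\<lambda>x. f x * deriv g x + deriv f x * g x)" by (rule Ck_add)
  then show ?case unfolding Ck_Suc e using df dg by (simp add: differentiable_mult)
qed

lemma Ck_const: "Ck k (\<lambda>x. c)"
  by (induction k arbitrary: c) (auto simp: Ck_0 Ck_Suc)

lemma Ck_id: "Ck k (\<lambda>x. x)"
  by (cases k) (auto simp: Ck_0 Ck_Suc Ck_const)

lemma Ck_comp: "Ck k f \<Longrightarrow> Ck k g \<Longrightarrow> Ck k (\<lambda>x. f (g x))"
proof (induction k arbitrary: f)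
  case 0
  have "\<And>x. f differentiable (at x)" "\<And>x. g differentiable (at x)" using 0 by (auto simp: Ck_0)
  then show ?case unfolding Ck_0 using differentiable_chain_at[of g _ f] by (simp add: o_def)
next
  case (Suc k)
  have df: "\<And>x. f differentiable (at x)" and dg: "\<And>x. g differentiable (at x)"
    using Suc.prems by (auto simp: Ck_Suc)
  have e: "deriv (\<lambda>x. f (g x)) = (\<lambda>x. deriv f (g x) * deriv g x)"
  proof
    fix x show "deriv (\<lambda>x. f (g x)) x = deriv f (g x) * deriv g x"
      using df dg deriv_chain[of g x f] by (simp add: rdiff_iff o_def)
  qed
  have ck: "Ck k (deriv f)" "Ck k g" "Ck k (deriv g)" using Suc.prems by (auto simp: Ck_Suc intro: Ck_mono)
  have "Ck k (\<lambda>x. deriv f (g x))"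
    using Suc.IH ck by blast
  then have "Ck k (\<lambda>x. deriv f (g x) * deriv g x)"
    using Ck_mult[OF _ ck(3)] by blast
  moreover have "\<forall>x. (\<lambda>x. f (g x)) differentiable (at x)"
    using differentiable_chain_at[of g _ f] df dg by (simp add: o_def)
  ultimately show ?case unfolding Ck_Suc e by blast
qed

lemma Ck_sincos: "Ck k sin \<and> Ck k cos"
proof (induction k)
  case 0 then show ?case by (auto simp: Ck_0 rdiff_iff field_differentiable_def intro: DERIV_sin DERIV_cos)
next
  case (Suc k)
  have e1: "deriv sin = cos" and e2: "deriv cos = (\<lambda>x. - sin x)"
    by (auto intro!: ext DERIV_imp_deriv DERIV_sin DERIV_cos)
  have "Ck k (\<lambda>x. - sin x)"
    using Ck_mult[OF Ck_const[of k "-1"], of sin] Suc by simp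
  then show ?case using Suc
    by (auto simp: Ck_Suc e1 e2 rdiff_iff field_differentiable_def intro: DERIV_sin DERIV_cos)
qed

lemma tanh_D: "((tanh::real\<Rightarrow>real) has_real_derivative (1 - tanh x ^ 2)) (at x)"
  using has_field_derivative_tanh[OF _ DERIV_ident, of x UNIV] by simp

lemma Ck_tanh: "Ck k (tanh :: real \<Rightarrow> real)"
proof (induction k)
  case 0 then show ?case
    by (auto simp: Ck_0 rdiff_iff field_differentiable_def intro: tanh_D)
next
  case (Suc k)
  have "deriv (tanh::real\<Rightarrow>real) = (\<lambda>x. 1 + (-1) * (tanh x * tanh x))"
    by (auto intro!: ext DERIV_imp_deriv tanh_D[THEN DERIV_cong] simp: power2_eq_square)
  moreover have "Ck k (\<lambda>x. 1 + (-1) * (tanh x * tanh x))"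
    using Suc by (intro Ck_add Ck_mult Ck_const) auto
  ultimately show ?case
    by (auto simp: Ck_Suc rdiff_iff field_differentiable_def intro: tanh_D)
qed

lemma Ck_antideriv: "(\<And>x. (F has_real_derivative f x) (at x)) \<Longrightarrow> Ck k f \<Longrightarrow> Ck (Suc k) F"
proof -
  assume d: "\<And>x. (F has_real_derivative f x) (at x)" and c: "Ck k f"
  have "deriv F = f" using d by (auto intro!: ext DERIV_imp_deriv)
  then show ?thesis using d c by (auto simp: Ck_Suc rdiff_iff field_differentiable_def)
qed

lemma FTC_at:
  fixes f :: "real \<Rightarrow> real" and c x :: real
  assumes cf: "\<And>x. isCont f x"
  shows "((\<lambda>u. LBINT y=c..u. f y) has_real_derivative f x) (at x)"
proof -
  define a :: real where "a = min c x - 1"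
  define b :: real where "b = max c x + 1"
  have "continuous_on {a..b} f" using cf by (simp add: continuous_at_imp_continuous_on)
  then have "((\<lambda>u. LBINT y=c..u. f y) has_vector_derivative f x) (at x within {a..b})"
    by (intro interval_integral_FTC2) (auto simp: a_def b_def)
  then have "((\<lambda>u. LBINT y=c..u. f y) has_vector_derivative f x) (at x within {a<..<b})"
    by (rule has_vector_derivative_within_subset) auto
  then have "((\<lambda>u. LBINT y=c..u. f y) has_vector_derivative f x) (at x)"
    by (subst (asm) has_vector_derivative_within_open) (auto simp: a_def b_def)
  then show ?thesis by (simp add: has_real_derivative_iff_has_vector_derivative)
qed

lemma min_ereal2: "min (ereal a) (ereal b) = ereal (min a b)" by (simp add: min_def)
lemma max_ereal2: "max (ereal a) (ereal b) = ereal (max a b)" by (simp add: max_def)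

lemma ii_cont: "(\<And>x. isCont f x) \<Longrightarrow> interval_lebesgue_integrable lborel (ereal a) (ereal b) (f::real\<Rightarrow>real)"
  by (rule interval_integrable_isCont) auto

lemma Ck_isCont: "Ck k f \<Longrightarrow> isCont f x"
  using Ck_mono'[of k f 0] by (auto simp: Ck_0 differentiable_imp_continuous_within)

lemma antideriv_props:
  fixes f :: "real \<Rightarrow> real"
  assumes sm: "\<And>k. Ck k f" and per: "periodic2pi f" and z: "(LBINT y=-pi..pi. f y) = 0"
  defines "F \<equiv> (\<lambda>x. LBINT y=0..x. f y)"
  shows "smooth_fun F" "periodic2pi F" "\<And>x. deriv F x = f x" "\<And>x. (F has_real_derivative f x) (at x)"
proof -
  have cf: "\<And>x. isCont f x" using sm Ck_isCont by blast
  have d: "\<And>x. (F has_real_derivative f x) (at x)" unfolding F_def using FTC_at[OF cf, of 0] by (simp add: zero_ereal_def)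
  then show "\<And>x. (F has_real_derivative f x) (at x)" .
  show "\<And>x. deriv F x = f x" using d by (rule DERIV_imp_deriv)
  have "Ck (Suc k) F" for k using Ck_antideriv[OF d sm] .
  then show "smooth_fun F" unfolding smooth_Ck using Ck_mono by blast
  have dD: "((\<lambda>x. F (x + 2*pi) - F x) has_real_derivative 0) (at x)" for x
  proof -
    have "((\<lambda>x. F (x + 2*pi)) has_real_derivative f (x + 2*pi)) (at x)"
      using d[of "x + 2*pi"] by (simp add: DERIV_shift)
    then have "((\<lambda>x. F (x + 2*pi) - F x) has_real_derivative f (x + 2*pi) - f x) (at x)"
      by (intro derivative_intros d)
    moreover have "f (x + 2*pi) = f x" using per by (simp add: periodic2pi_def)
    ultimately show ?thesis by simp
  qed
  have "F (x + 2*pi) - F x = F (-pi + 2*pi) - F (-pi)" for x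
    using DERIV_isconst_all[of "\<lambda>x. F (x + 2*pi) - F x"] dD by blast
  moreover have "F (-pi + 2*pi) - F (-pi) = 0"
  proof -
    have "(LBINT y=ereal 0..ereal (-pi). f y) + (LBINT y=ereal (-pi)..ereal pi. f y) = (LBINT y=ereal 0..ereal pi. f y)"
      by (intro interval_integral_sum) (simp add: min_ereal2 max_ereal2 ii_cont cf)
    then show ?thesis using z by (simp add: F_def zero_ereal_def)
  qed
  ultimately show "periodic2pi F" unfolding periodic2pi_def by simp
qed

lemma K_lemma:
  fixes F :: "real \<Rightarrow> real"
  assumes int: "integrable lborel F"
    and z: "\<And>x. (\<integral>y. indicator {x<..} y * F y \<partial>lborel) = 0"
  shows "AE x in lborel. F x = 0"
proof -
  have Fm[measurable]: "F \<in> borel_measurable borel" using int by (simp add: borel_measurable_integrable)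
  define P where "P = (\<lambda>x. max 0 (F x))"
  define Q where "Q = (\<lambda>x. max 0 (- F x))"
  have Pm[measurable]: "P \<in> borel_measurable borel" "Q \<in> borel_measurable borel" unfolding P_def Q_def by auto
  have iP: "integrable lborel (\<lambda>y. P y * indicator A y)" if "A \<in> sets borel" for A
    unfolding P_def using that
    by (intro Bochner_Integration.integrable_bound[OF integrable_norm[OF int]]) (auto split: split_indicator)
  have iQ: "integrable lborel (\<lambda>y. Q y * indicator A y)" if "A \<in> sets borel" for A
    unfolding Q_def using that
    by (intro Bochner_Integration.integrable_bound[OF integrable_norm[OF int]]) (auto split: split_indicator)
  define M where "M = density lborel (\<lambda>x. ennreal (P x))"
  define N where "N = density lborel (\<lambda>x. ennreal (Q x))"
  have eM: "emeasure M A = ennreal (\<integral>y. P y * indicator A y \<partial>lborel)" if A[measurable]: "A \<in> sets borel" for A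
  proof -
    have "emeasure M A = (\<integral>\<^sup>+y. ennreal (P y) * indicator A y \<partial>lborel)"
      unfolding M_def by (subst emeasure_density) auto
    also have "\<dots> = (\<integral>\<^sup>+y. ennreal (P y * indicator A y) \<partial>lborel)"
      by (intro nn_integral_cong) (auto simp: P_def split: split_indicator)
    also have "\<dots> = ennreal (\<integral>y. P y * indicator A y \<partial>lborel)"
      by (intro nn_integral_eq_integral iP[OF A]) (auto simp: P_def)
    finally show ?thesis .
  qed
  have eN: "emeasure N A = ennreal (\<integral>y. Q y * indicator A y \<partial>lborel)" if A[measurable]: "A \<in> sets borel" for A
  proof -
    have "emeasure N A = (\<integral>\<^sup>+y. ennreal (Q y) * indicator A y \<partial>lborel)"
      unfolding N_def by (subst emeasure_density) auto
    also have "\<dots> = (\<integral>\<^sup>+y. ennreal (Q y * indicator A y) \<partial>lborel)"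
      by (intro nn_integral_cong) (auto simp: Q_def split: split_indicator)
    also have "\<dots> = ennreal (\<integral>y. Q y * indicator A y \<partial>lborel)"
      by (intro nn_integral_eq_integral iQ[OF A]) (auto simp: Q_def)
    finally show ?thesis .
  qed
  have "M = N"
  proof (rule measure_eqI_lessThan)
    show "sets M = sets borel" "sets N = sets borel" by (auto simp: M_def N_def)
    show "emeasure M {x<..} < \<infinity>" for x using eM[of "{x<..}"] by simp
    show "emeasure M {x<..} = emeasure N {x<..}" for x
    proof -
      have "(\<integral>y. P y * indicator {x<..} y \<partial>lborel) - (\<integral>y. Q y * indicator {x<..} y \<partial>lborel)
          = (\<integral>y. P y * indicator {x<..} y - Q y * indicator {x<..} y \<partial>lborel)"
        by (rule Bochner_Integration.integral_diff[symmetric]) (auto intro: iP iQ)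
      also have "\<dots> = (\<integral>y. indicator {x<..} y * F y \<partial>lborel)"
        by (intro Bochner_Integration.integral_cong) (auto simp: P_def Q_def split: split_indicator)
      finally show ?thesis using z[of x] eM[of "{x<..}"] eN[of "{x<..}"] by simp
    qed
  qed
  then have "AE x in lborel. ennreal (P x) = ennreal (Q x)"
    unfolding M_def N_def by (intro sigma_finite_measure.density_unique[OF sigma_finite_lborel]) auto
  then show ?thesis
    by eventually_elim (auto simp: P_def Q_def max_def split: if_splits)
qed

lemma K_local:
  fixes f :: "real \<Rightarrow> real"
  assumes si: "\<And>a b. set_integrable lborel {a<..b} f"
    and z: "\<And>a b. a \<le> b \<Longrightarrow> (LBINT x=ereal a..ereal b. f x) = 0"
  shows "AE x in lborel. f x = 0"
proof -
  have "AE x in lborel. indicator {- real n<..real n} x * f x = 0" for n :: nat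
  proof (rule K_lemma)
    show "integrable lborel (\<lambda>x. indicator {- real n<..real n} x * f x)"
      using si[of "- real n" "real n"] by (simp add: set_integrable_def)
    fix x
    have e: "(\<lambda>y. indicator {x<..} y * (indicator {- real n<..real n} y * f y))
        = (\<lambda>y. indicator {max x (- real n)<..real n} y *\<^sub>R f y)"
      by (auto simp: split: split_indicator)
    show "(\<integral>y. indicator {x<..} y * (indicator {- real n<..real n} y * f y) \<partial>lborel) = 0"
    proof (cases "max x (- real n) \<le> real n")
      case True
      define m where "m = max x (- real n)"
      have "(LBINT y=ereal m..ereal (real n). f y) = 0" using True by (intro z) (simp add: m_def)
      moreover have "(LBINT y=ereal m..ereal (real n). f y) = (LBINT y:{m<..real n}. f y)"
        using True by (intro interval_integral_Ioc) (simp add: m_def)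
      ultimately show ?thesis unfolding e m_def[symmetric]
        by (simp add: set_lebesgue_integral_def)
    next
      case False
      then have "\<And>y. indicator {max x (- real n)<..real n} y = (0::real)" by (auto split: split_indicator)
      then show ?thesis unfolding e by simp
    qed
  qed
  then have "AE x in lborel. \<forall>n::nat. indicator {- real n<..real n} x * f x = 0"
    by (subst AE_all_countable) (intro allI, simp only:)
  then show ?thesis
  proof eventually_elim
    case (elim x)
    obtain n :: nat where "\<bar>x\<bar> < real n" using reals_Archimedean2 by blast
    then have "indicator {- real n<..real n} x = (1::real)" by (auto simp: indicator_def)
    then show ?case using elim[rule_format, of n] by simp
  qed
qed

definition chi :: "real \<Rightarrow> real \<Rightarrow> nat \<Rightarrow> real \<Rightarrow> real" where
  "chi a b m x = (1 + tanh (real m * (cos (x - (a+b)/2) - cos ((b-a)/2)))) / 2"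

lemma chi_Ck: "Ck k (chi a b m)"
proof -
  define c where "c = (a+b)/2"
  define d where "d = cos ((b-a)/2)"
  have c1: "Ck k (\<lambda>x. x + (- c))" by (intro Ck_add Ck_id Ck_const)
  have c2: "Ck k (\<lambda>x. cos (x + (- c)))" using Ck_comp[OF conjunct2[OF Ck_sincos] c1] .
  have c3: "Ck k (\<lambda>x. cos (x + (- c)) + (- d))" by (intro Ck_add c2 Ck_const)
  have c4: "Ck k (\<lambda>x. real m * (cos (x + (- c)) + (- d)))" by (intro Ck_mult c3 Ck_const)
  have c5: "Ck k (\<lambda>x. tanh (real m * (cos (x + (- c)) + (- d))))"
    using Ck_comp[OF Ck_tanh c4] .
  have c6: "Ck k (\<lambda>x. (1/2) * (1 + tanh (real m * (cos (x + (- c)) + (- d)))))"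
    by (intro Ck_mult Ck_add c5 Ck_const)
  show ?thesis by (rule Ck_cong[OF _ c6]) (simp add: chi_def fun_eq_iff c_def[symmetric] d_def[symmetric])
qed

lemma chi_per: "periodic2pi (chi a b m)"
proof -
  have "cos (x + 2 * pi - (a + b) / 2) = cos (x - (a + b) / 2)" for x
    using cos_periodic[of "x - (a+b)/2"] by (simp add: algebra_simps)
  then show ?thesis by (simp add: periodic2pi_def chi_def)
qed

lemma chi_bounds: "0 \<le> chi a b m x" "chi a b m x \<le> 1"
  using tanh_real_bounds[of "real m * (cos (x - (a+b)/2) - cos ((b-a)/2))"]
  by (auto simp: chi_def)

lemma cos_lt_aux:
  fixes r e :: real
  assumes "0 < r" "r \<le> pi" "r < e" "e < 2*pi - r"
  shows "cos e < cos r"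
proof (cases "e \<le> pi")
  case True then show ?thesis using assms by (intro cos_monotone_0_pi) auto
next
  case False
  have "cos e = cos (2*pi - e)" by (simp add: cos_diff)
  also have "\<dots> < cos r" using assms False by (intro cos_monotone_0_pi) auto
  finally show ?thesis .
qed

lemma chi_sign:
  fixes a b x :: real
  assumes ab: "-pi \<le> a" "a < b" "b \<le> pi" and x: "-pi < x" "x < pi" "x \<noteq> a" "x \<noteq> b"
  shows "a < x \<and> x < b \<Longrightarrow> cos (x - (a+b)/2) > cos ((b-a)/2)"
    and "\<not>(a < x \<and> x < b) \<Longrightarrow> cos (x - (a+b)/2) < cos ((b-a)/2)"
proof -
  define r where "r = (b - a)/2"
  define d where "d = x - (a+b)/2"
  have r: "0 < r" "r \<le> pi" using ab by (auto simp: r_def)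
  show "cos (x - (a+b)/2) > cos ((b-a)/2)" if "a < x \<and> x < b"
  proof -
    have "-r < d" "d < r" using that by (auto simp: d_def r_def field_simps)
    then have "\<bar>d\<bar> < r" by auto
    then have "cos r < cos \<bar>d\<bar>" using r by (intro cos_monotone_0_pi) auto
    moreover have "cos \<bar>d\<bar> = cos d" by (cases "d \<ge> 0") auto
    ultimately show ?thesis by (simp add: d_def r_def)
  qed
  show "cos (x - (a+b)/2) < cos ((b-a)/2)" if "\<not>(a < x \<and> x < b)"
  proof -
    have xo: "x < a \<or> b < x" using that x by auto
    have "r < \<bar>d\<bar> \<and> \<bar>d\<bar> < 2*pi - r"
    proof (cases "x < a")
      case True
      then have "d < -r" "-(2*pi - r) < d" using ab x by (simp_all add: d_def r_def field_simps)
      then show ?thesis using r by auto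
    next
      case False
      then have "b < x" using xo by auto
      then have "r < d" "d < 2*pi - r" using ab x by (simp_all add: d_def r_def field_simps)
      then show ?thesis using r by auto
    qed
    then have "r < \<bar>d\<bar>" "\<bar>d\<bar> < 2*pi - r" by auto
    then have "cos \<bar>d\<bar> < cos r" using r by (intro cos_lt_aux) auto
    moreover have "cos \<bar>d\<bar> = cos d" by (cases "d \<ge> 0") auto
    ultimately show ?thesis by (simp add: d_def r_def)
  qed
qed

lemma tanh_lim_pos: "u > 0 \<Longrightarrow> (\<lambda>m. tanh (real m * u)) \<longlonglongrightarrow> (1::real)"
proof -
  assume u: "u > 0"
  have "filterlim (\<lambda>m. u * real m) at_top sequentially"
    by (rule filterlim_tendsto_pos_mult_at_top[OF tendsto_const u filterlim_real_sequentially])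
  then have "filterlim (\<lambda>m. real m * u) at_top sequentially" by (simp add: mult.commute)
  then show ?thesis by (rule filterlim_compose[OF tanh_real_at_top])
qed

lemma chi_lim:
  assumes ab: "-pi \<le> a" "a < b" "b \<le> pi" and x: "-pi < x" "x < pi" "x \<noteq> a" "x \<noteq> b"
  shows "(\<lambda>m. chi a b m x) \<longlonglongrightarrow> indicator {a<..<b} x"
proof (cases "a < x \<and> x < b")
  case True
  then have u: "cos (x - (a+b)/2) - cos ((b-a)/2) > 0" using chi_sign(1)[OF ab x] by simp
  have "(\<lambda>m. (1 + tanh (real m * (cos (x - (a+b)/2) - cos ((b-a)/2)))) / 2) \<longlonglongrightarrow> (1 + 1) / 2"
    by (intro tendsto_intros tanh_lim_pos u) simp
  then show ?thesis using True by (simp add: chi_def indicator_def)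
next
  case False
  then have u: "cos ((b-a)/2) - cos (x - (a+b)/2) > 0" using chi_sign(2)[OF ab x] by simp
  have "(\<lambda>m. (1 - tanh (real m * (cos ((b-a)/2) - cos (x - (a+b)/2)))) / 2) \<longlonglongrightarrow> (1 - 1) / 2"
    by (intro tendsto_intros tanh_lim_pos u) simp
  moreover have "tanh (real m * (cos (x - (a+b)/2) - cos ((b-a)/2))) = - tanh (real m * (cos ((b-a)/2) - cos (x - (a+b)/2)))" for m
    by (metis minus_diff_eq mult_minus_right tanh_minus)
  ultimately have "(\<lambda>m. chi a b m x) \<longlonglongrightarrow> 0" by (simp add: chi_def)
  moreover have "indicator {a<..<b} x = (0::real)" using False by (simp add: indicator_def)
  ultimately show ?thesis by simp
qed

lemma chi_meas: "chi a b m \<in> borel_measurable borel"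
  by (rule borel_measurable_continuous_onI) (simp add: continuous_at_imp_continuous_on Ck_isCont[OF chi_Ck[of 0]])

lemma LIM_chi:
  fixes h :: "real \<Rightarrow> real"
  assumes hi: "set_integrable lborel {-pi<..<pi} h"
    and ab: "-pi \<le> a" "a < b" "b \<le> pi"
  shows "(\<lambda>m. LBINT x=-pi..pi. h x * chi a b m x) \<longlonglongrightarrow> (LBINT x=-pi..pi. h x * indicator {a<..<b} x)"
proof -
  have hm: "(\<lambda>x. indicator {-pi<..<pi} x *\<^sub>R h x) \<in> borel_measurable lborel"
    using hi by (simp add: set_integrable_def borel_measurable_integrable)
  have "(\<lambda>m. \<integral>x. indicator {-pi<..<pi} x *\<^sub>R (h x * chi a b m x) \<partial>lborel)
      \<longlonglongrightarrow> (\<integral>x. indicator {-pi<..<pi} x *\<^sub>R (h x * indicator {a<..<b} x) \<partial>lborel)"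
  proof (rule integral_dominated_convergence[where w="\<lambda>x. norm (indicator {-pi<..<pi} x *\<^sub>R h x)"])
    show "(\<lambda>x. indicator {-pi<..<pi} x *\<^sub>R (h x * indicator {a<..<b} x)) \<in> borel_measurable lborel"
      using hm by (simp add: mult.assoc[symmetric])
    show "(\<lambda>x. indicator {-pi<..<pi} x *\<^sub>R (h x * chi a b m x)) \<in> borel_measurable lborel" for m
      using hm chi_meas[of a b m] by (simp add: mult.assoc[symmetric])
    show "integrable lborel (\<lambda>x. norm (indicator {-pi<..<pi} x *\<^sub>R h x))"
      using hi by (simp add: set_integrable_def)
    show "AE x in lborel. norm (indicator {-pi<..<pi} x *\<^sub>R (h x * chi a b m x)) \<le> norm (indicator {-pi<..<pi} x *\<^sub>R h x)" for m
      using chi_bounds[of a b m] by (auto simp: abs_mult intro!: mult_left_le split: split_indicator)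
    have "AE x in lborel. x \<noteq> a \<and> x \<noteq> b \<and> x \<noteq> -pi \<and> x \<noteq> pi"
      using AE_lborel_singleton[of a] AE_lborel_singleton[of b] AE_lborel_singleton[of "-pi"] AE_lborel_singleton[of pi]
      by eventually_elim auto
    then show "AE x in lborel. (\<lambda>m. indicator {-pi<..<pi} x *\<^sub>R (h x * chi a b m x)) \<longlonglongrightarrow> indicator {-pi<..<pi} x *\<^sub>R (h x * indicator {a<..<b} x)"
    proof eventually_elim
      case (elim x)
      show ?case
      proof (cases "-pi < x \<and> x < pi")
        case True
        then show ?thesis using elim by (intro tendsto_intros chi_lim ab) auto
      qed simp
    qed
  qed
  then show ?thesis by (simp add: interval_integral_Ioo set_lebesgue_integral_def)
qed

lemma ii_iff: "interval_lebesgue_integrable lborel (ereal (-pi)) (ereal pi) f \<longleftrightarrow> set_integrable lborel {-pi<..<pi} f"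
  by (simp add: interval_lebesgue_integrable_def)

lemma si_mult_bounded:
  fixes g k :: "real \<Rightarrow> real"
  assumes g: "set_integrable lborel S g" and k: "k \<in> borel_measurable borel" and b: "\<And>x. \<bar>k x\<bar> \<le> C"
  shows "set_integrable lborel S (\<lambda>x. g x * k x)"
  unfolding set_integrable_def
proof (rule Bochner_Integration.integrable_bound)
  show "integrable lborel (\<lambda>x. C * norm (indicator S x *\<^sub>R g x))"
    using g by (simp add: set_integrable_def)
  show "(\<lambda>x. indicator S x *\<^sub>R (g x * k x)) \<in> borel_measurable lborel"
  proof -
    have "(\<lambda>x. indicator S x *\<^sub>R g x) \<in> borel_measurable lborel"
      using g by (simp add: set_integrable_def borel_measurable_integrable)
    then have "(\<lambda>x. (indicator S x *\<^sub>R g x) * k x) \<in> borel_measurable lborel"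
      using k by measurable
    then show ?thesis by (simp add: mult.assoc)
  qed
  show "AE x in lborel. norm (indicator S x *\<^sub>R (g x * k x)) \<le> norm (C * norm (indicator S x *\<^sub>R g x))"
  proof (intro always_eventually allI)
    fix x
    have kc: "\<bar>k x\<bar> \<le> \<bar>C\<bar>" using b[of x] by linarith
    have "\<bar>indicator S x\<bar> * (\<bar>g x\<bar> * \<bar>k x\<bar>) \<le> \<bar>indicator S x\<bar> * (\<bar>g x\<bar> * \<bar>C\<bar>)"
      by (intro mult_left_mono kc) auto
    then show "norm (indicator S x *\<^sub>R (g x * k x)) \<le> norm (C * norm (indicator S x *\<^sub>R g x))"
      by (simp add: abs_mult mult_ac)
  qed
qed

lemma restrict_0pi: "(LBINT x=ereal 0..ereal pi. (F::real\<Rightarrow>real) x) = (LBINT x=-pi..pi. indicator {0<..<pi} x * F x)"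
  unfolding interval_integral_Ioo[of "ereal 0" "ereal pi", simplified] interval_integral_Ioo[of "ereal (-pi)" "ereal pi", simplified] set_lebesgue_integral_def
  by (rule Bochner_Integration.integral_cong) (auto split: split_indicator)

lemma partA:
  fixes g :: "real \<Rightarrow> real" and A a b :: real
  assumes gi: "set_integrable lborel {-pi<..<pi} g"
    and eq: "\<And>\<psi>. smooth_fun \<psi> \<Longrightarrow> periodic2pi \<psi> \<Longrightarrow>
         -(LBINT x=-pi..pi. g x * deriv \<psi> x) = 2*(A*\<psi> 0 - A*\<psi> pi)"
    and ab: "-pi \<le> a" "a < b" "b \<le> pi"
  shows "(LBINT x=-pi..pi. g x * indicator {a<..<b} x)
      - (LBINT x=-pi..pi. 1 * indicator {a<..<b} x) / (2*pi) * (LBINT x=-pi..pi. g x)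
    = 2*A*((LBINT x=-pi..pi. indicator {0<..<pi} x * indicator {a<..<b} x)
      - (LBINT x=-pi..pi. 1 * indicator {a<..<b} x) / (2*pi) * pi)"
proof -
  define X1 where "X1 m = (LBINT x=-pi..pi. g x * chi a b m x)" for m
  define X2 where "X2 m = (LBINT x=-pi..pi. 1 * chi a b m x)" for m
  define X3 where "X3 m = (LBINT x=-pi..pi. indicator {0<..<pi} x * chi a b m x)" for m
  define G where "G = (LBINT x=-pi..pi. g x)"
  have one: "set_integrable lborel {-pi<..<pi} (\<lambda>x. 1::real)"
    using interval_integral_const(1)[of "-pi" pi 1] unfolding interval_lebesgue_integrable_def by simp
  have h3: "set_integrable lborel {-pi<..<pi} (\<lambda>x. 1 * indicator {0<..<pi} x :: real)"
    by (rule si_mult_bounded[OF one, where C=1]) auto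
  have per_m: "X1 m - X2 m / (2*pi) * G = 2*A*(X3 m - X2 m / (2*pi) * pi)" for m
  proof -
    define c where "c = X2 m / (2*pi)"
    define f where "f = (\<lambda>x. chi a b m x + (- c))"
    have ick: "\<And>h. set_integrable lborel {-pi<..<pi} h \<Longrightarrow> set_integrable lborel {-pi<..<pi} (\<lambda>x. h x * chi a b m x)"
      by (intro si_mult_bounded[where C=1] chi_meas) (auto simp: abs_of_nonneg chi_bounds)
    have fk: "Ck k f" for k unfolding f_def by (intro Ck_add chi_Ck Ck_const)
    have fp: "periodic2pi f" using chi_per[of a b m] by (simp add: periodic2pi_def f_def)
    have i2: "interval_lebesgue_integrable lborel (ereal (-pi)) (ereal pi) (\<lambda>x. chi a b m x)"
      using ick[OF one] by (simp add: ii_iff)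
    have fz: "(LBINT y=-pi..pi. f y) = 0"
      using i2 by (simp add: f_def c_def X2_def)
    define \<psi> :: "real \<Rightarrow> real" where "\<psi> = (\<lambda>x. LBINT y=0..x. f y)"
    note ap = antideriv_props[OF fk fp fz, folded \<psi>_def]
    have "-(LBINT x=-pi..pi. g x * deriv \<psi> x) = 2*(A*\<psi> 0 - A*\<psi> pi)"
      by (rule eq) (use ap in auto)
    moreover have "\<psi> 0 = 0" by (simp add: \<psi>_def zero_ereal_def)
    moreover have "(LBINT x=-pi..pi. g x * deriv \<psi> x) = X1 m - c * G"
    proof -
      have "(LBINT x=-pi..pi. g x * deriv \<psi> x) = (LBINT x=-pi..pi. g x * chi a b m x - c * g x)"
      proof -
        have e: "deriv \<psi> = (\<lambda>x. chi a b m x - c)" using ap(3) by (simp add: f_def fun_eq_iff)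
        show ?thesis unfolding e by (simp add: algebra_simps)
      qed
      also have "\<dots> = X1 m - c * G"
        using ick[OF gi] gi by (simp add: ii_iff[symmetric] X1_def G_def)
      finally show ?thesis .
    qed
    moreover have "\<psi> pi = X3 m - c * pi"
    proof -
      have "\<psi> pi = (LBINT x=-pi..pi. indicator {0<..<pi} x * f x)"
        unfolding \<psi>_def by (simp add: restrict_0pi[symmetric] zero_ereal_def)
      also have "\<dots> = (LBINT x=-pi..pi. indicator {0<..<pi} x * chi a b m x - c * (1 * indicator {0<..<pi} x))"
        by (simp add: f_def algebra_simps)
      also have "\<dots> = X3 m - c * (LBINT x=-pi..pi. 1 * indicator {0<..<pi} x)"
        using ick[OF h3] h3 by (subst interval_lebesgue_integral_diff(2)) (simp_all add: ii_iff X3_def)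
      also have "(LBINT x=-pi..pi. 1 * indicator {0<..<pi} x) = pi"
        using restrict_0pi[of "\<lambda>x. 1"] by simp
      finally show ?thesis .
    qed
    ultimately show ?thesis by (simp add: c_def algebra_simps)
  qed
  have L1: "X1 \<longlonglongrightarrow> (LBINT x=-pi..pi. g x * indicator {a<..<b} x)"
    unfolding X1_def by (rule LIM_chi[OF gi ab])
  have L2: "X2 \<longlonglongrightarrow> (LBINT x=-pi..pi. 1 * indicator {a<..<b} x)"
    unfolding X2_def by (rule LIM_chi[OF one ab])
  have L3: "X3 \<longlonglongrightarrow> (LBINT x=-pi..pi. indicator {0<..<pi} x * indicator {a<..<b} x)"
    unfolding X3_def using LIM_chi[OF h3 ab] by simp
  have "(\<lambda>m. X1 m - X2 m / (2*pi) * G) \<longlonglongrightarrow> (LBINT x=-pi..pi. g x * indicator {a<..<b} x)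
      - (LBINT x=-pi..pi. 1 * indicator {a<..<b} x) / (2*pi) * G"
    by (intro tendsto_intros L1 L2) simp
  moreover have "(\<lambda>m. X1 m - X2 m / (2*pi) * G) \<longlonglongrightarrow> 2*A*((LBINT x=-pi..pi. indicator {0<..<pi} x * indicator {a<..<b} x)
      - (LBINT x=-pi..pi. 1 * indicator {a<..<b} x) / (2*pi) * pi)"
    unfolding per_m by (intro tendsto_intros L2 L3) simp
  ultimately show ?thesis unfolding G_def by (rule LIMSEQ_unique)
qed

lemma lam_meas: "lam \<in> borel_measurable borel"
  unfolding lam_def[abs_def] Let_def by measurable

lemma lam_per: "lam (x + 2*pi) = lam x"
proof -
  have "(x + 2*pi + pi) / (2*pi) = (x + pi) / (2*pi) + 1" by (simp add: field_simps)
  then have "\<lfloor>(x + 2*pi + pi) / (2*pi)\<rfloor> = \<lfloor>(x + pi) / (2*pi)\<rfloor> + 1" by simp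
  then have "x + 2*pi - 2*pi * of_int \<lfloor>(x + 2*pi + pi) / (2*pi)\<rfloor> = x - 2*pi * of_int \<lfloor>(x + pi) / (2*pi)\<rfloor>"
    by (simp add: algebra_simps)
  then show ?thesis unfolding lam_def Let_def by simp
qed

lemma lam_on: assumes "-pi < x" "x < pi" shows "lam x = (if x < 0 then -1 else if 0 < x then 1 else 0)"
proof -
  have "0 \<le> (x + pi) / (2*pi)" "(x + pi) / (2*pi) < 1" using assms by (auto simp: field_simps)
  then have "\<lfloor>(x + pi) / (2*pi)\<rfloor> = 0" by (simp add: floor_eq_iff)
  then show ?thesis using assms unfolding lam_def Let_def by auto
qed

lemma lam_bound: "\<bar>lam x\<bar> \<le> 1"
  unfolding lam_def Let_def by auto

lemma si_bounded:
  fixes f :: "real \<Rightarrow> real"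
  assumes f: "f \<in> borel_measurable lborel" and B: "AE x in lborel. \<bar>f x\<bar> \<le> B"
    and S: "S \<in> sets lborel" "emeasure lborel S < \<infinity>"
  shows "set_integrable lborel S f"
  unfolding set_integrable_def
proof (rule Bochner_Integration.integrable_bound)
  show "integrable lborel (\<lambda>x. B * indicator S x)" using S by simp
  show "(\<lambda>x. indicator S x *\<^sub>R f x) \<in> borel_measurable lborel" using f S by measurable
  show "AE x in lborel. norm (indicator S x *\<^sub>R f x) \<le> norm (B * indicator S x)"
    using B by eventually_elim (auto split: split_indicator)
qed

lemma shift_int:
  fixes f :: "real \<Rightarrow> real" and a b c :: real
  shows "(LBINT y=ereal (a+c)..ereal (b+c). f y) = (LBINT y=ereal a..ereal b. f (y + c))"
proof -
  have *: "(LBINT y:{a+c<..<b+c}. f y) = (LBINT y:{a<..<b}. f (y + c))" for a b :: real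
  proof -
    have "(LBINT y:{a+c<..<b+c}. f y) = (\<integral>y. indicator {a+c<..<b+c} y *\<^sub>R f y \<partial>lborel)"
      by (simp add: set_lebesgue_integral_def)
    also have "\<dots> = \<bar>1\<bar> *\<^sub>R (\<integral>y. indicator {a+c<..<b+c} (c + 1 * y) *\<^sub>R f (c + 1 * y) \<partial>lborel)"
      by (rule lborel_integral_real_affine) simp
    also have "\<dots> = (\<integral>y. indicator {a<..<b} y *\<^sub>R f (y + c) \<partial>lborel)"
    proof -
      have "\<And>y. indicator {a+c<..<b+c} (c + 1 * y) *\<^sub>R f (c + 1 * y) = indicator {a<..<b} y *\<^sub>R f (y + c)"
        by (auto simp: add.commute split: split_indicator)
      then show ?thesis by simp
    qed
    finally show ?thesis by (simp add: set_lebesgue_integral_def)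
  qed
  show ?thesis
  proof (cases "a \<le> b")
    case True then show ?thesis using * by (simp add: interval_integral_Ioo)
  next
    case False then show ?thesis using *[of b a]
      by (simp add: interval_lebesgue_integral_gt_eq)
  qed
qed

lemma per_int:
  fixes f :: "real \<Rightarrow> real" and x :: real
  assumes li: "\<And>a b. interval_lebesgue_integrable lborel (ereal a) (ereal b) f"
    and per: "\<And>x. f (x + 2*pi) = f x"
  shows "(LBINT y=ereal 0..ereal (x+2*pi). f y) = (LBINT y=ereal 0..ereal x. f y) + (LBINT y=ereal (-pi)..ereal pi. f y)"
proof -
  have sum: "(LBINT y=ereal a..ereal b. f y) + (LBINT y=ereal b..ereal c. f y) = (LBINT y=ereal a..ereal c. f y)" for a b c
  proof (rule interval_integral_sum)
    show "interval_lebesgue_integrable lborel (min (ereal a) (min (ereal b) (ereal c))) (max (ereal a) (max (ereal b) (ereal c))) f"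
      unfolding min_ereal2 max_ereal2 by (rule li)
  qed
  have fs: "(\<lambda>y. f (y + 2*pi)) = f" using per by (simp add: fun_eq_iff)
  have s2: "(LBINT y=ereal (2*pi)..ereal (x+2*pi). f y) = (LBINT y=ereal 0..ereal x. f y)"
    using shift_int[where f=f and a=0 and c="2*pi" and b=x] unfolding fs by simp
  have s3: "(LBINT y=ereal pi..ereal (2*pi). f y) = (LBINT y=ereal (-pi)..ereal 0. f y)"
    using shift_int[where f=f and a="-pi" and c="2*pi" and b=0] unfolding fs by simp
  have e1: "(LBINT y=ereal 0..ereal (x+2*pi). f y) = (LBINT y=ereal 0..ereal (2*pi). f y) + (LBINT y=ereal (2*pi)..ereal (x+2*pi). f y)"
    using sum[of 0 "2*pi" "x+2*pi"] by (rule sym)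
  have e2: "(LBINT y=ereal 0..ereal (2*pi). f y) = (LBINT y=ereal 0..ereal pi. f y) + (LBINT y=ereal pi..ereal (2*pi). f y)"
    using sum[of 0 pi "2*pi"] by (rule sym)
  have e3: "(LBINT y=ereal (-pi)..ereal 0. f y) + (LBINT y=ereal 0..ereal pi. f y) = (LBINT y=ereal (-pi)..ereal pi. f y)"
    by (rule sum)
  show ?thesis unfolding e1 e2 s2 s3 using e3 by linarith
qed

lemma ii_mult_bounded:
  fixes g k :: "real \<Rightarrow> real"
  assumes "interval_lebesgue_integrable lborel a b g" "k \<in> borel_measurable borel" "\<And>x. \<bar>k x\<bar> \<le> C"
  shows "interval_lebesgue_integrable lborel a b (\<lambda>x. g x * k x)"
  using assms si_mult_bounded[of _ g k C] unfolding interval_lebesgue_integrable_def by (auto split: if_splits)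

lemma V_int_shift:
  fixes V :: "real \<Rightarrow> 'a"
  assumes per: "\<And>x. V (x + 2*pi) = V x"
  shows "V (y + 2*pi * of_int k) = V y"
proof -
  have n: "V (z + 2*pi * real n) = V z" for z n
  proof (induction n)
    case (Suc n)
    have "V (z + 2*pi * real (Suc n)) = V ((z + 2*pi * real n) + 2*pi)" by (simp add: algebra_simps)
    then show ?case using per Suc by simp
  qed simp
  show ?thesis
  proof (cases "k \<ge> 0")
    case True
    then obtain n where kn: "k = int n" using nonneg_int_cases by blast
    have "(of_int k :: real) = real n" using kn by simp
    then show ?thesis using n[of y n] by metis
  next
    case False
    define n where "n = nat (-k)"
    have kn: "k = - int n" using False by (simp add: n_def)
    have "V y = V ((y - 2*pi * real n) + 2*pi * real n)" by simp
    also have "\<dots> = V (y - 2*pi * real n)" by (rule n)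
    moreover have "(of_int k :: real) = - real n" using kn by simp
    ultimately show ?thesis by (simp only: diff_conv_add_uminus mult_minus_right)
  qed
qed

lemma V_const:
  fixes V :: "real \<Rightarrow> 'a"
  assumes per: "\<And>x. V (x + 2*pi) = V x" and c: "\<And>x. -pi \<le> x \<Longrightarrow> x \<le> pi \<Longrightarrow> V x = V 0"
  shows "V x = V 0"
proof -
  define k where "k = \<lfloor>(x + pi) / (2*pi)\<rfloor>"
  define y where "y = x - 2*pi * of_int k"
  have "of_int k \<le> (x + pi) / (2*pi)" "(x + pi) / (2*pi) < of_int k + 1"
    unfolding k_def by linarith+
  then have "-pi \<le> y" "y \<le> pi" unfolding y_def by (auto simp: field_simps)
  moreover have "V x = V (y + 2*pi * of_int k)" unfolding y_def by simp
  moreover have "V (y + 2*pi * of_int k) = V y" by (rule V_int_shift) (rule per)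
  ultimately show ?thesis using c[of y] by simp
qed

lemma loc_int:
  fixes f :: "real \<Rightarrow> real"
  assumes "\<And>a b. a \<le> b \<Longrightarrow> set_integrable lborel {a..b} f"
  shows "interval_lebesgue_integrable lborel (ereal a) (ereal b) f" "set_integrable lborel {a<..b} f"
proof -
  have I: "set_integrable lborel {min a b..max a b} f" using assms by simp
  show "set_integrable lborel {a<..b} f"
    by (rule set_integrable_subset[OF I]) auto
  show "interval_lebesgue_integrable lborel (ereal a) (ereal b) f"
    unfolding interval_lebesgue_integrable_def
    by (auto intro!: set_integrable_subset[OF I])
qed

theorem proposition3p7:
  fixes n :: nat and q \<kappa> t \<eta> \<mu> :: real
    and N \<phi> d\<phi> dd\<phi> w dw :: "real \<Rightarrow> real"
  assumes n: "n \<ge> 3"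
    and q_def: "q = 2 * real n / (real n - 2)"
    and kappa_def: "\<kappa> = (real n - 1) / real n"
    and N_smooth: "smooth_fun N" and N_per: "periodic2pi N" and N_pos: "\<forall>x. N x > 0"
    and phi_per: "periodic2pi \<phi>" and phi_pos: "\<forall>x. \<phi> x > 0"
    and phi_d: "\<forall>x. (\<phi> has_real_derivative d\<phi> x) (at x)"
    and phi_dd: "weak_deriv_Linf d\<phi> dd\<phi>"
    and w_per: "periodic2pi w"
    and w_d: "weak_deriv_Linf w dw"
    and eq1: "AE x in lborel.
        - 2 * \<kappa> * q * dd\<phi> x - 2 * \<eta>\<^sup>2 * \<phi> x powr (- q - 1)
        - \<kappa> * (\<mu> + dw x / (2 * N x))\<^sup>2 * \<phi> x powr (- q - 1)
        + \<kappa> * (t + lam x)\<^sup>2 * \<phi> x powr (q - 1) = 0"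
    and eq2: "\<forall>\<psi>. smooth_fun \<psi> \<and> periodic2pi \<psi> \<longrightarrow>
        - (LBINT x=-pi..pi. dw x / (2 * N x) * deriv \<psi> x)
          = 2 * (\<phi> 0 powr q * \<psi> 0 - \<phi> pi powr q * \<psi> pi)"
  shows "AE x in lborel.
     dw x / (2 * N x) = \<phi> 0 powr q *
        (lam x + (- (LBINT y=-pi..pi. lam y * N y) / (LBINT y=-pi..pi. N y)))"
proof -
  define A where "A = \<phi> 0 powr q"
  define g where "g = (\<lambda>x. dw x / (2 * N x))"
  have Nck: "\<And>k. Ck k N" using N_smooth by (simp add: smooth_Ck)
  have Ncont: "\<And>x. isCont N x" using Ck_isCont[OF Nck] .
  have Nmeas[measurable]: "N \<in> borel_measurable borel"
    by (rule borel_measurable_continuous_onI) (simp add: continuous_at_imp_continuous_on Ncont)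
  obtain B where B: "AE x in lborel. \<bar>dw x\<bar> \<le> B" using w_d unfolding weak_deriv_Linf_def by blast
  have dwm[measurable]: "dw \<in> borel_measurable borel" using w_d unfolding weak_deriv_Linf_def by simp
  have wint: "\<And>a b. w b - w a = (LBINT x=ereal a..ereal b. dw x)" using w_d unfolding weak_deriv_Linf_def by blast
  have lm[measurable]: "lam \<in> borel_measurable borel" by (rule lam_meas)
  have phipi: "\<phi> pi powr q = A"
  proof -
    have "smooth_fun (\<lambda>x::real. 1::real)" by (simp add: smooth_Ck Ck_const)
    moreover have "periodic2pi (\<lambda>x::real. 1::real)" by (simp add: periodic2pi_def)
    ultimately have "- (LBINT x=-pi..pi. dw x / (2 * N x) * deriv (\<lambda>x. 1) x) = 2 * (\<phi> 0 powr q * 1 - \<phi> pi powr q * 1)"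
      using eq2 by blast
    then show ?thesis by (simp add: A_def)
  qed
  have eqg: "\<And>\<psi>. smooth_fun \<psi> \<Longrightarrow> periodic2pi \<psi> \<Longrightarrow> -(LBINT x=-pi..pi. g x * deriv \<psi> x) = 2*(A*\<psi> 0 - A*\<psi> pi)"
    using eq2 phipi by (simp add: g_def A_def)
  obtain m0 where m0: "\<And>x. -pi \<le> x \<Longrightarrow> x \<le> pi \<Longrightarrow> m0 \<le> N x" and m0pos: "m0 > 0"
  proof -
    obtain M where M: "\<forall>x. -pi \<le> x \<and> x \<le> pi \<longrightarrow> M \<le> N x" "\<exists>x. -pi \<le> x \<and> x \<le> pi \<and> N x = M"
      using isCont_eq_Lb[of "-pi" pi N] Ncont by auto
    then have "M > 0" using N_pos by auto
    then show ?thesis using M that by blast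
  qed
  have gm[measurable]: "g \<in> borel_measurable borel" unfolding g_def by measurable
  have one: "set_integrable lborel {-pi<..<pi} (\<lambda>x. 1::real)"
    using interval_integral_const(1)[of "-pi" pi 1] unfolding interval_lebesgue_integrable_def by simp
  have gi: "set_integrable lborel {-pi<..<pi} g"
    unfolding set_integrable_def
  proof (rule Bochner_Integration.integrable_bound)
    show "integrable lborel (\<lambda>x. (\<bar>B\<bar> / (2*m0)) * indicator {-pi<..<pi} x)" by simp
    show "(\<lambda>x. indicator {-pi<..<pi} x *\<^sub>R g x) \<in> borel_measurable lborel" by measurable
    show "AE x in lborel. norm (indicator {-pi<..<pi} x *\<^sub>R g x) \<le> norm ((\<bar>B\<bar> / (2*m0)) * indicator {-pi<..<pi} x)"
      using B
    proof eventually_elim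
      case (elim x)
      show ?case
      proof (cases "-pi < x \<and> x < pi")
        case True
        then have Nx: "m0 \<le> N x" using m0 by auto
        have "\<bar>dw x\<bar> / (2 * N x) \<le> \<bar>B\<bar> / (2 * N x)" using elim N_pos[rule_format, of x]
          by (intro divide_right_mono) auto
        also have "\<dots> \<le> \<bar>B\<bar> / (2 * m0)" using Nx m0pos by (intro divide_left_mono) auto
        finally show ?thesis using True N_pos[rule_format, of x] m0pos by (simp add: g_def abs_divide abs_mult)
      qed simp
    qed
  qed
  define G where "G = (LBINT x=-pi..pi. g x)"
  define t0 where "t0 = (\<lambda>x. A * lam x + G/(2*pi))"
  have t0m[measurable]: "t0 \<in> borel_measurable borel" unfolding t0_def by measurable
  have t0b: "\<bar>t0 x\<bar> \<le> \<bar>A\<bar> + \<bar>G/(2*pi)\<bar>" for x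
  proof -
    have "\<bar>A * lam x\<bar> \<le> \<bar>A\<bar>" using lam_bound[of x] by (simp add: abs_mult mult_left_le)
    then show ?thesis unfolding t0_def by linarith
  qed
  have PA: "(LBINT x=-pi..pi. (g x - t0 x) * indicator {a<..<b} x) = 0"
    if ab: "-pi \<le> a" "a < b" "b \<le> pi" for a b
  proof -
    note E = partA[OF gi eqg ab]
    have bI: "interval_lebesgue_integrable lborel (ereal (-pi)) (ereal pi) (\<lambda>x. k x * indicator {a<..<b} x)"
      if [measurable]: "k \<in> borel_measurable borel" and kb: "\<And>x. \<bar>k x\<bar> \<le> C" for k :: "real \<Rightarrow> real" and C
    proof -
      have "set_integrable lborel {-pi<..<pi} (\<lambda>x. 1 * (k x * indicator {a<..<b} x))"
      proof (rule si_mult_bounded[OF one, where C=C])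
        show "\<bar>k x * indicator {a<..<b} x\<bar> \<le> C" for x using kb[of x]
          by (auto simp: indicator_def abs_mult)
      qed measurable
      then show ?thesis by (simp add: ii_iff)
    qed
    have gI: "interval_lebesgue_integrable lborel (ereal (-pi)) (ereal pi) (\<lambda>x. g x * indicator {a<..<b} x)"
      using si_mult_bounded[OF gi, of "indicator {a<..<b}" 1] by (simp add: ii_iff)
    have oI: "interval_lebesgue_integrable lborel (ereal (-pi)) (ereal pi) (\<lambda>x. (1::real) * indicator {a<..<b} x)"
      by (rule bI[where k="\<lambda>x. 1" and C=1]) auto
    have hI: "interval_lebesgue_integrable lborel (ereal (-pi)) (ereal pi) (\<lambda>x. indicator {0<..<pi} x * (indicator {a<..<b} x :: real))"
      by (rule bI[where k="indicator {0<..<pi}" and C=1]) auto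
    have lI: "interval_lebesgue_integrable lborel (ereal (-pi)) (ereal pi) (\<lambda>x. lam x * indicator {a<..<b} x)"
      by (rule bI[where k=lam and C=1]) (auto simp: lam_bound)
    have lamI: "(LBINT x=-pi..pi. lam x * indicator {a<..<b} x)
       = 2 * (LBINT x=-pi..pi. indicator {0<..<pi} x * indicator {a<..<b} x) - (LBINT x=-pi..pi. 1 * indicator {a<..<b} x)"
    proof -
      have "(LBINT x=-pi..pi. lam x * indicator {a<..<b} x)
          = (LBINT x=-pi..pi. 2 * (indicator {0<..<pi} x * indicator {a<..<b} x) - 1 * indicator {a<..<b} x)"
      proof (rule interval_integral_discrete_difference[where X="{0}"])
        fix x assume "ereal (-pi) \<le> ereal pi" "ereal (-pi) < ereal x" "ereal x < ereal pi" "x \<notin> {0}"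
        then have "-pi < x" "x < pi" "x \<noteq> 0" by auto
        then show "lam x * indicator {a<..<b} x = 2 * (indicator {0<..<pi} x * indicator {a<..<b} x) - 1 * indicator {a<..<b} x"
          using lam_on[of x] by (auto simp: indicator_def)
      qed (insert pi_gt_zero, auto)
      also have "\<dots> = 2 * (LBINT x=-pi..pi. indicator {0<..<pi} x * indicator {a<..<b} x) - (LBINT x=-pi..pi. 1 * indicator {a<..<b} x)"
        using hI oI by simp
      finally show ?thesis .
    qed
    have "(LBINT x=-pi..pi. (g x - t0 x) * indicator {a<..<b} x)
        = (LBINT x=-pi..pi. g x * indicator {a<..<b} x - (A * (lam x * indicator {a<..<b} x) + G/(2*pi) * (1 * indicator {a<..<b} x)))"
      by (simp add: t0_def algebra_simps)
    also have "\<dots> = (LBINT x=-pi..pi. g x * indicator {a<..<b} x) - (A * (LBINT x=-pi..pi. lam x * indicator {a<..<b} x) + G/(2*pi) * (LBINT x=-pi..pi. 1 * indicator {a<..<b} x))"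
      using gI lI oI by simp
    also have "\<dots> = 0"
    proof -
      have alg: "Jg - (A * Jl + GG/(2*pi) * J1) = 0"
        if e1: "Jg - J1/(2*pi)*GG = 2*A*(Jh - J1/(2*pi)*pi)" and e2: "Jl = 2*Jh - J1" for Jg J1 Jh Jl GG :: real
      proof -
        have "2*A*(Jh - J1/(2*pi)*pi) = 2*A*Jh - A*J1" by (simp add: field_simps)
        moreover have "J1/(2*pi)*GG = GG/(2*pi) * J1" by simp
        moreover have "A * Jl = 2*A*Jh - A*J1" unfolding e2 by (simp add: algebra_simps)
        ultimately show ?thesis using e1 by linarith
      qed
      show ?thesis using alg[OF E lamI] unfolding G_def .
    qed
    finally show ?thesis .
  qed
  have t0i: "set_integrable lborel {-pi<..<pi} t0"
    using si_mult_bounded[OF one t0m t0b] by simp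
  define F where "F = (\<lambda>x. indicator {-pi<..<pi} x * (g x - t0 x))"
  have Fint: "integrable lborel F"
    using set_integral_diff(1)[OF gi t0i] unfolding set_integrable_def F_def by simp
  have "AE x in lborel. F x = 0"
  proof (rule K_local)
    show "set_integrable lborel {a<..b} F" for a b
      unfolding set_integrable_def by (rule integrable_mult_indicator[OF _ Fint]) simp
    show "(LBINT x=ereal a..ereal b. F x) = 0" if "a \<le> b" for a b
    proof -
      define a' where "a' = max a (-pi)"
      define b' where "b' = min b pi"
      have "(LBINT x=ereal a..ereal b. F x) = (\<integral>x. indicator {a<..<b} x *\<^sub>R F x \<partial>lborel)"
        using that by (simp add: interval_integral_Ioo set_lebesgue_integral_def)
      also have "\<dots> = 0"
      proof (cases "a' < b'")
        case True
        have "(\<integral>x. indicator {a<..<b} x *\<^sub>R F x \<partial>lborel)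
            = (\<integral>x. indicator {-pi<..<pi} x *\<^sub>R ((g x - t0 x) * indicator {a'<..<b'} x) \<partial>lborel)"
          by (intro Bochner_Integration.integral_cong) (auto simp: F_def a'_def b'_def indicator_def)
        also have "\<dots> = (LBINT x=-pi..pi. (g x - t0 x) * indicator {a'<..<b'} x)"
          by (simp add: interval_integral_Ioo set_lebesgue_integral_def)
        also have "\<dots> = 0" using True by (intro PA) (auto simp: a'_def b'_def)
        finally show ?thesis .
      next
        case False
        then have "(\<lambda>x. indicator {a<..<b} x *\<^sub>R F x) = (\<lambda>x. 0)"
          by (auto simp: F_def a'_def b'_def indicator_def fun_eq_iff)
        then show ?thesis by simp
      qed
      finally show ?thesis .
    qed
  qed
  then have AEg: "AE x in lborel. -pi < x \<and> x < pi \<longrightarrow> dw x = 2 * N x * t0 x"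
  proof eventually_elim
    case (elim x)
    show ?case
    proof
      assume x: "-pi < x \<and> x < pi"
      then have "g x = t0 x" using elim by (simp add: F_def indicator_def)
      then show "dw x = 2 * N x * t0 x" using N_pos[rule_format, of x] by (simp add: g_def field_simps)
    qed
  qed
  have dwIcc: "set_integrable lborel {a..b} dw" if "a \<le> b" for a b
    by (rule si_bounded[OF _ B]) (use that in auto)
  note dwL = loc_int[OF dwIcc]
  have NIcc: "set_integrable lborel {a..b} (\<lambda>x. 2 * N x)" for a b
    by (rule borel_integrable_atLeastAtMost') (intro continuous_at_imp_continuous_on ballI continuous_intros Ncont)
  have kIcc: "set_integrable lborel {a..b} (\<lambda>x. 2 * N x * k x)"
    if [measurable]: "k \<in> borel_measurable borel" and kb: "\<And>x. \<bar>k x\<bar> \<le> C" for a b k C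
    by (rule si_mult_bounded[OF NIcc _ kb]) measurable
  note t0L = loc_int[OF kIcc[OF t0m t0b]]
  have wab: "w b - w a = (LBINT x=ereal a..ereal b. 2 * N x * t0 x)" if "-pi \<le> a" "a \<le> b" "b \<le> pi" for a b
  proof -
    have "(LBINT x=ereal a..ereal b. dw x) = (LBINT x=ereal a..ereal b. 2 * N x * t0 x)"
    proof (rule interval_integral_cong_AE)
      show "AE x \<in> einterval (min (ereal a) (ereal b)) (max (ereal a) (ereal b)) in lborel. dw x = 2 * N x * t0 x"
        using AEg by eventually_elim (use that in \<open>auto simp: einterval_iff min_def max_def\<close>)
    qed measurable
    then show ?thesis using wint[of b a] by simp
  qed
  have w0: "w pi = w (-pi)" using w_per unfolding periodic2pi_def by (metis add.commute diff_add_cancel minus_add_distrib mult_2 uminus_add_conv_diff)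
  have zero0: "(LBINT x=ereal (-pi)..ereal pi. 2 * N x * t0 x) = 0"
    using wab[of "-pi" pi] w0 by simp
  define L where "L = (LBINT y=-pi..pi. lam y * N y)"
  define M where "M = (LBINT y=-pi..pi. N y)"
  define \<gamma> where "\<gamma> = - L / M"
  have NL: "interval_lebesgue_integrable lborel (ereal (-pi)) (ereal pi) N"
    by (rule ii_cont[OF Ncont])
  have Mpos: "M > 0"
  proof -
    have "(LBINT x:{-pi<..<pi}. m0) \<le> (LBINT x:{-pi<..<pi}. N x)"
    proof (rule set_integral_mono)
      show "set_integrable lborel {-pi<..<pi} (\<lambda>x. m0)"
        using interval_integral_const(1)[of "-pi" pi m0] unfolding interval_lebesgue_integrable_def by simp
      show "set_integrable lborel {-pi<..<pi} N" using NL by (simp add: ii_iff)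
    qed (use m0 in auto)
    moreover have "(LBINT x:{-pi<..<pi}. m0) = m0 * (2*pi)"
    proof -
      have "(LBINT x=ereal (-pi)..ereal pi. m0) = (LBINT x:{-pi<..<pi}. m0)"
        using interval_integral_Ioo[of "ereal (-pi)" "ereal pi" "\<lambda>x. m0"] by simp
      then show ?thesis using interval_integral_const(2)[of "-pi" pi m0] by simp
    qed
    ultimately have "m0 * (2*pi) \<le> M" unfolding M_def by (simp add: interval_integral_Ioo)
    moreover have "m0 * (2*pi) > 0" using m0pos by simp
    ultimately show ?thesis by linarith
  qed
  have lNL: "interval_lebesgue_integrable lborel (ereal (-pi)) (ereal pi) (\<lambda>x. N x * lam x)"
    by (rule ii_mult_bounded[OF NL lm lam_bound])
  have "(LBINT x=ereal (-pi)..ereal pi. 2 * N x * t0 x) = (LBINT x=ereal (-pi)..ereal pi. (2*A) * (N x * lam x) + (G/pi) * N x)"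
    by (simp add: t0_def algebra_simps)
  also have "\<dots> = 2*A*L + G/pi * M"
    using lNL NL by (simp add: L_def M_def mult.commute)
  finally have "2*A*L + G/pi * M = 0" using zero0 by simp
  then have Gc: "G/(2*pi) = A * \<gamma>" using Mpos by (simp add: \<gamma>_def field_simps)
  define t where "t = (\<lambda>x. A * (lam x + \<gamma>))"
  have t0t: "t0 = t" unfolding t0_def t_def using Gc by (simp add: fun_eq_iff algebra_simps)
  define f where "f = (\<lambda>x. 2 * N x * t x)"
  have tm[measurable]: "t \<in> borel_measurable borel" unfolding t_def by measurable
  have tb: "\<bar>t x\<bar> \<le> \<bar>A\<bar> * (1 + \<bar>\<gamma>\<bar>)" for x
  proof -
    have "\<bar>lam x + \<gamma>\<bar> \<le> 1 + \<bar>\<gamma>\<bar>" using lam_bound[of x] by linarith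
    then show ?thesis unfolding t_def abs_mult by (intro mult_left_mono) auto
  qed
  note fL = loc_int[OF kIcc[OF tm tb], folded f_def]
  have fper: "f (x + 2*pi) = f x" for x
    using N_per lam_per[of x] unfolding periodic2pi_def f_def t_def by simp
  have fzero: "(LBINT x=ereal (-pi)..ereal pi. f x) = 0"
    using zero0 unfolding t0t f_def .
  define T where "T = (\<lambda>x. LBINT y=ereal 0..ereal x. f y)"
  have Tper: "T (x + 2*pi) = T x" for x
    using per_int[OF fL(1) fper, of x] fzero unfolding T_def by simp
  have Tdiff: "T b - T a = (LBINT y=ereal a..ereal b. f y)" for a b
  proof -
    have "(LBINT y=ereal 0..ereal a. f y) + (LBINT y=ereal a..ereal b. f y) = (LBINT y=ereal 0..ereal b. f y)"
    proof (rule interval_integral_sum)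
      show "interval_lebesgue_integrable lborel (min (ereal 0) (min (ereal a) (ereal b))) (max (ereal 0) (max (ereal a) (ereal b))) f"
        unfolding min_ereal2 max_ereal2 by (rule fL(1))
    qed
    then show ?thesis unfolding T_def by simp
  qed
  define V where "V = (\<lambda>x. w x - T x)"
  have Vper: "V (x + 2*pi) = V x" for x
    using w_per Tper unfolding periodic2pi_def V_def by simp
  have Vab: "V b = V a" if "-pi \<le> a" "a \<le> b" "b \<le> pi" for a b
    using wab[OF that] Tdiff[where a=a and b=b] unfolding V_def t0t f_def by simp
  have Vc: "V x = V 0" if "-pi \<le> x" "x \<le> pi" for x
  proof (cases "0 \<le> x")
    case True then show ?thesis using Vab[of 0 x] that by simp
  next
    case False then show ?thesis using Vab[of x 0] that by simp
  qed
  have Vall: "V x = V 0" for x by (rule V_const[OF Vper Vc])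
  have "AE x in lborel. dw x - f x = 0"
  proof (rule K_local)
    show "set_integrable lborel {a<..b} (\<lambda>x. dw x - f x)" for a b
      by (rule set_integral_diff(1)[OF dwL(2) fL(2)])
    show "(LBINT x=ereal a..ereal b. dw x - f x) = 0" if "a \<le> b" for a b
    proof -
      have "(LBINT x=ereal a..ereal b. dw x - f x) = (LBINT x=ereal a..ereal b. dw x) - (LBINT x=ereal a..ereal b. f x)"
        by (rule interval_lebesgue_integral_diff(2)[OF dwL(1) fL(1)])
      also have "\<dots> = (w b - w a) - (T b - T a)" using wint[of b a] Tdiff[where a=a and b=b] by simp
      also have "\<dots> = V b - V a" unfolding V_def by simp
      also have "\<dots> = 0" using Vall[of a] Vall[of b] by simp
      finally show ?thesis .
    qed
  qed
  then show ?thesis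
  proof eventually_elim
    case (elim x)
    then have "dw x = 2 * N x * t x" by (simp add: f_def)
    then show ?case using N_pos[rule_format, of x]
      by (simp add: t_def A_def \<gamma>_def L_def M_def)
  qed
qed

end
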